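(* Let $n\ge4$, $0<\alpha_2,\alpha_3<1$, $\alpha_1=1-\alpha_2-\alpha_3$, $\lambda^*=\big(\frac{n-1+\alpha_1}{n},\frac{\alpha_2}{n},\frac{\alpha_3}{n}\big)$. Then $$|l_{(n-2,1,1)}(\lambda^* )|\le\frac{2}{e(\ln n-1)}\binom{n}{n-2}.$$
   Context: For an integer $n\ge1$ and $i=(i_1,i_2,i_3)\in\mathbb{Z}_+^3$ with $i_1+i_2+i_3=n$, $l_i(\lambda)=\prod_{s=1}^{3}\frac{1}{i_s!}\prod_{t=0}^{i_s-1}(n\lambda_s-t)$ for $\lambda=(\lambda_1,\lambda_2,\lambda_3)$ (Lagrange fundamental polynomials for the equally spaced nodes $i/n$ of a triangle in barycentric coordinates). *)

theory Defs
  imports Complex_Main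
begin

text \<open>Lagrange fundamental polynomial for the equally spaced nodes i/n of a triangle,
  in barycentric coordinates; i = (i1,i2,i3) with i1+i2+i3 = n.\<close>

definition lag_factor :: "nat \<Rightarrow> nat \<Rightarrow> real \<Rightarrow> real" where
  "lag_factor n k x = (\<Prod>t<k. (real n * x - real t)) / fact k"

definition lagr :: "nat \<Rightarrow> nat \<times> nat \<times> nat \<Rightarrow> real \<times> real \<times> real \<Rightarrow> real" where
  "lagr n i lam = (case i of (i1, i2, i3) \<Rightarrow> case lam of (l1, l2, l3) \<Rightarrow>
     lag_factor n i1 l1 * lag_factor n i2 l2 * lag_factor n i3 l3)"

end

theory Submission
  imports Defs
begin

lemma prodC:
  fixes s :: real
  assumes "0 \<le> s" "s \<le> 3"
  shows "(\<Prod>j<m. (real j + 3 - s)) \<le> fact (m+2) / 2 * exp (- s * (\<Sum>j<m. 1 / (real j + 3)))"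
proof (induction m)
  case 0
  then show ?case by simp
next
  case (Suc m)
  have f: "real m + 3 - s \<le> (real m + 3) * exp (- s / (real m + 3))"
  proof -
    have "1 - s / (real m + 3) \<le> exp (- s / (real m + 3))"
      using exp_ge_add_one_self[of "- s / (real m + 3)"] by simp
    hence "(real m + 3) * (1 - s / (real m + 3)) \<le> (real m + 3) * exp (- s / (real m + 3))"
      by (intro mult_left_mono) auto
    moreover have "(real m + 3) * (1 - s / (real m + 3)) = real m + 3 - s"
      by (simp add: field_simps)
    ultimately show ?thesis by simp
  qed
  have nn: "0 \<le> real m + 3 - s" using assms by simp
  have P0: "0 \<le> (\<Prod>j<m. (real j + 3 - s))" using assms by (intro prod_nonneg) auto
  have "(\<Prod>j<Suc m. (real j + 3 - s)) = (\<Prod>j<m. (real j + 3 - s)) * (real m + 3 - s)" by simp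
  also have "\<dots> \<le> (fact (m+2) / 2 * exp (- s * (\<Sum>j<m. 1 / (real j + 3)))) * ((real m + 3) * exp (- s / (real m + 3)))"
    by (intro mult_mono Suc.IH f nn P0) (auto)
  also have "\<dots> = fact (Suc m + 2) / 2 * exp (- s * (\<Sum>j<Suc m. 1 / (real j + 3)))"
    by (simp add: exp_add[symmetric] algebra_simps add_divide_distrib)
  finally show ?case .
qed

lemma sumD:
  assumes "m \<ge> 1"
  shows "(ln (real m + 2) - 1) / 4 \<le> (\<Sum>j<m. 1 / (real j + 3))"
  using assms
proof (induction m rule: nat_induct_at_least)
  case base
  have "ln (3::real) \<le> 3 - 1" using ln_le_minus_one[of 3] by simp
  then show ?case by simp
next
  case (Suc m)
  have "ln (real m + 3) - ln (real m + 2) = ln ((real m + 3) / (real m + 2))"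
    by (simp add: ln_div)
  also have "\<dots> \<le> (real m + 3) / (real m + 2) - 1" by (rule ln_le_minus_one) simp
  also have "\<dots> = 1 / (real m + 2)" by (simp add: field_simps)
  also have "\<dots> \<le> 4 / (real m + 3)" by (simp add: field_simps)
  finally have "ln (real m + 3) - ln (real m + 2) \<le> 4 / (real m + 3)" .
  then show ?case using Suc.IH by (simp add: algebra_simps)
qed

lemma ue: fixes u :: real shows "u * exp (- u) \<le> exp (-1)"
proof -
  have "u \<le> exp (u - 1)" using exp_ge_add_one_self[of "u - 1"] by simp
  hence "u * exp (-u) \<le> exp (u - 1) * exp (-u)" by (intro mult_right_mono) auto
  also have "\<dots> = exp (-1)" by (simp flip: exp_add)
  finally show ?thesis .
qed

theorem lemma24:
  fixes n :: nat and a1 a2 a3 :: real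
  assumes "n \<ge> 4"
    and "0 < a2" "a2 < 1" "0 < a3" "a3 < 1"
    and "a1 = 1 - a2 - a3"
  shows "\<bar>lagr n (n - 2, 1, 1) ((real n - 1 + a1) / real n, a2 / real n, a3 / real n)\<bar>
         \<le> 2 / (exp 1 * (ln (real n) - 1)) * real (n choose (n - 2))"
proof -
  define m where "m = n - 2"
  define s where "s = a2 + a3"
  have nm: "n = m + 2" using assms(1) m_def by simp
  have npos: "real n > 0" using assms(1) by simp
  have s0: "0 < s" "s < 2" using assms s_def by auto
  have f2: "lag_factor n 1 (a2 / real n) = a2" using npos by (simp add: lag_factor_def)
  have f3: "lag_factor n 1 (a3 / real n) = a3" using npos by (simp add: lag_factor_def)
  have "real n * ((real n - 1 + a1) / real n) = real n - s"
    using npos unfolding assms(6) s_def by (simp add: field_simps)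
  hence f1: "lag_factor n (n-2) ((real n - 1 + a1) / real n) = (\<Prod>t<m. (real n - s - real t)) / fact m"
  proof -
    have "a1 = 1 - s" unfolding assms(6) s_def by simp
    thus ?thesis using npos by (simp add: lag_factor_def m_def)
  qed
  have "(\<Prod>t<m. (real n - s - real t)) = (\<Prod>t<m. (real (m - Suc t) + 3 - s))"
    by (intro prod.cong refl) (auto simp: nm of_nat_diff)
  also have "\<dots> = (\<Prod>j<m. (real j + 3 - s))"
    using prod.nat_diff_reindex[of "\<lambda>j. real j + 3 - s" m] by simp
  finally have Peq: "(\<Prod>t<m. (real n - s - real t)) = (\<Prod>j<m. (real j + 3 - s))" .
  define S where "S = (\<Sum>j<m. 1 / (real j + 3))"
  define L where "L = ln (real n) - 1"
  have m1: "m \<ge> 1" using assms(1) m_def by simp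
  have SL: "L / 4 \<le> S" using sumD[OF m1] unfolding S_def L_def nm by (simp add: add.commute)
  have ln4: "ln (4::real) > 1"
  proof -
    have "exp 1 < (4::real)" using exp_le by linarith
    thus ?thesis using ln_less_cancel_iff[of "exp 1" 4] by simp
  qed
  have "ln (4::real) \<le> ln (real n)" using assms(1) by simp
  hence Lpos: "L > 0" unfolding L_def using ln4 by linarith
  have P0: "0 \<le> (\<Prod>j<m. (real j + 3 - s))" using s0 by (intro prod_nonneg) auto
  have PC: "(\<Prod>j<m. (real j + 3 - s)) \<le> fact (m+2) / 2 * exp (- s * S)"
    unfolding S_def by (rule prodC) (use s0 in auto)
  have "a2 * a3 \<le> a2" "a2 * a3 \<le> a3" using assms(2-5) by (simp_all add: mult_left_le mult_right_le_one_le)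
  hence a23: "a2 * a3 \<le> s / 2" using s_def by linarith
  have eS: "exp (- s * S) \<le> exp (- s * (L/4))" using SL s0 by simp
  have key: "s * exp (- s * (L/4)) \<le> 4 / (exp 1 * L)"
  proof -
    have "(s * (L/4)) * exp (- (s * (L/4))) \<le> exp (-1)" by (rule ue)
    hence "s * exp (- s * (L/4)) \<le> exp (-1) / (L/4)" using Lpos
      by (simp add: field_simps)
    also have "\<dots> = 4 / (exp 1 * L)" by (simp add: exp_minus field_simps)
    finally show ?thesis .
  qed
  have lag: "lagr n (n - 2, 1, 1) ((real n - 1 + a1) / real n, a2 / real n, a3 / real n)
      = a2 * a3 * (\<Prod>j<m. (real j + 3 - s)) / fact m"
    unfolding lagr_def using f1 f2 f3 Peq by simp
  have ch: "real (n choose (n - 2)) = fact (m+2) / (fact m * 2)"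
    using binomial_fact[of "n-2" n] assms(1) by (simp add: nm)
  have "a2 * a3 * (\<Prod>j<m. (real j + 3 - s)) \<le> (s/2) * (fact (m+2) / 2 * exp (- s * S))"
    by (rule mult_mono[OF a23 PC]) (use s0 P0 in auto)
  also have "\<dots> \<le> (s/2) * (fact (m+2) / 2 * exp (- s * (L/4)))"
    using s0 eS by (intro mult_left_mono) auto
  also have "\<dots> = fact (m+2) / 4 * (s * exp (- s * (L/4)))" by simp
  also have "\<dots> \<le> fact (m+2) / 4 * (4 / (exp 1 * L))"
    by (intro mult_left_mono key) auto
  finally have B: "a2 * a3 * (\<Prod>j<m. (real j + 3 - s)) \<le> fact (m+2) / 4 * (4 / (exp 1 * L))" .
  have nonneg: "0 \<le> a2 * a3 * (\<Prod>j<m. (real j + 3 - s)) / fact m"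
    using assms(2,4) P0 by simp
  have "a2 * a3 * (\<Prod>j<m. (real j + 3 - s)) / fact m \<le> fact (m+2) / 4 * (4 / (exp 1 * L)) / fact m"
    using B by (intro divide_right_mono) simp_all
  also have "\<dots> = 2 / (exp 1 * L) * (fact (m+2) / (fact m * 2))" using Lpos by (simp add: field_simps)
  finally show ?thesis using nonneg unfolding lag ch L_def by simp
qed

end
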